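(* Let $R$ be a commutative ring with unit and let $S\subset\mathbb{N}$ be $R$-admissible. Then for each $m,n\in S$ with $m\mid n$ the homomorphism $\rho^R_{\langle n\rangle,\langle m\rangle}\colon R[q]^{\langle n\rangle}\to R[q]^{\langle m\rangle}$ is injective. Hence, regarding each $R[q]^{\langle n\rangle}$ ($n\in S$) as an $R$-subalgebra of $R[q]^{\langle1\rangle}=R[[q-1]]$ via these maps, $R[q]^S$ is identified with the intersection $\bigcap_{n\in S}R[q]^{\langle n\rangle}$. In particular, if $m,n\in\mathbb{N}$ and $m\mid n$, then $\rho^{\mathbb{Z}}_{\langle n\rangle,\langle m\rangle}\colon\mathbb{Z}[q]^{\langle n\rangle}\to\mathbb{Z}[q]^{\langle m\rangle}$ is injective, and $\mathbb{Z}[q]^{\mathbb{N}}=\bigcap_{n\in\mathbb{N}}\mathbb{Z}[q]^{\langle n\rangle}$ inside $\mathbb{Z}[[q-1]]$.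
   Context: $q$ is an indeterminate, $\Phi_n(q)$ the $n$th cyclotomic polynomial. For $S\subset\mathbb{N}$, $\Phi_S^*$ is the multiplicative subset of $\mathbb{Z}[q]$ generated by $\{\Phi_k(q):k\in S\}$, directed by divisibility, and $R[q]^S=\varprojlim_{f\in\Phi_S^*}R[q]/(f)$; for $S'\subset S$, $\rho^R_{S,S'}$ is induced by the identity of $R[q]$. For $n\in\mathbb{N}$, $\langle n\rangle=\{k\in\mathbb{N}:k\mid n\}$, so $R[q]^{\langle n\rangle}=\varprojlim_j R[q]/(q^n-1)^j$. $R$ is $p$-adically separated if $\bigcap_j p^jR=(0)$. For $k,k'\in\mathbb{N}$, $k\Leftrightarrow_R k'$ means $k=k'$, or $k/k'$ is an integer power (positive or negative exponent) of a prime $p$ with $R$ $p$-adically separated, or $R=\{0\}$. A subset $S\subset\mathbb{N}$ is $R$-admissible if it is nonempty, any two of its elements are joined by a finite chain in $S$ with consecutive elements related by $\Leftrightarrow_R$, $S$ is directed under divisibility, and $n\in S$ implies $\langle n\rangle\subset S$. *)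

theory Defs
  imports "HOL-Computational_Algebra.Computational_Algebra" "HOL-Library.Multiset"
begin

text \<open>Cyclotomic polynomials over the integers, defined by the recursion
  q^n - 1 = product of cyclo d over the divisors d of n (for n \<ge> 1).
  The value at 0 is irrelevant (index set is the positive integers).\<close>
function cyclo :: "nat \<Rightarrow> int poly" where
  "cyclo n = (if n = 0 then 1 else
     (monom 1 n - 1) div (\<Prod>d\<in>{d. d dvd n \<and> d < n}. cyclo d))"
  by pat_completeness auto
termination
  by (relation "measure id") auto

definition ofip :: "int poly \<Rightarrow> 'a::comm_ring_1 poly" where
  "ofip f = map_poly of_int f"

definition Phi_star :: "nat set \<Rightarrow> int poly set" where
  "Phi_star S = {prod_mset (image_mset cyclo M) | M. set_mset M \<subseteq> S}"

text \<open>Elements of R[q]^S = lim_{f \<in> \<Phi>_S^*} R[q]/(f) are represented by compatible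
  families of representatives x f \<in> R[q] (f \<in> \<Phi>_S^*), the index set being directed
  by divisibility in Z[q].\<close>
definition lim_elem :: "nat set \<Rightarrow> (int poly \<Rightarrow> 'a::comm_ring_1 poly) \<Rightarrow> bool" where
  "lim_elem S x \<longleftrightarrow> (\<forall>f\<in>Phi_star S. \<forall>g\<in>Phi_star S. f dvd g \<longrightarrow> ofip f dvd (x g - x f))"

text \<open>Equality of two families as elements of R[q]^S.  Since the maps \<rho>_{S,S'} are induced
  by the identity of R[q], \<rho>_{S,S'}(x) = \<rho>_{S,S'}(y) in R[q]^{S'} iff lim_eq S' x y.\<close>
definition lim_eq :: "nat set \<Rightarrow> (int poly \<Rightarrow> 'a::comm_ring_1 poly) \<Rightarrow> (int poly \<Rightarrow> 'a poly) \<Rightarrow> bool" where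
  "lim_eq S x y \<longleftrightarrow> (\<forall>f\<in>Phi_star S. ofip f dvd (x f - y f))"

definition divs :: "nat \<Rightarrow> nat set" where
  "divs n = {k. 0 < k \<and> k dvd n}"

definition padic_separated :: "nat \<Rightarrow> 'a::comm_ring_1 itself \<Rightarrow> bool" where
  "padic_separated p _ \<longleftrightarrow> (\<forall>x::'a. (\<forall>j. (of_nat p :: 'a) ^ j dvd x) \<longrightarrow> x = 0)"

definition rel_R :: "'a::comm_ring_1 itself \<Rightarrow> nat \<Rightarrow> nat \<Rightarrow> bool" where
  "rel_R R k k' \<longleftrightarrow> k = k' \<or>
     (\<exists>p i. prime p \<and> padic_separated p R \<and> (k = k' * p ^ i \<or> k' = k * p ^ i)) \<or>
     (UNIV :: 'a set) = {0}"

definition admissible :: "'a::comm_ring_1 itself \<Rightarrow> nat set \<Rightarrow> bool" where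
  "admissible R S \<longleftrightarrow> S \<noteq> {} \<and> S \<subseteq> {k. 0 < k} \<and>
     (\<forall>a\<in>S. \<forall>b\<in>S. (\<lambda>x y. x \<in> S \<and> y \<in> S \<and> rel_R R x y)\<^sup>*\<^sup>* a b) \<and>
     (\<forall>a\<in>S. \<forall>b\<in>S. \<exists>c\<in>S. a dvd c \<and> b dvd c) \<and>
     (\<forall>n\<in>S. divs n \<subseteq> S)"

end

theory Submission
  imports Defs "HOL-Computational_Algebra.Field_as_Ring"
begin

declare cyclo.simps[simp del]

lemma dvd_pow_sub: "(a - b) dvd (a ^ n - b ^ n)" for a b :: "'a::comm_ring_1"
proof (induction n)
  case 0 then show ?case by simp
next
  case (Suc n)
  have "a ^ Suc n - b ^ Suc n = a * (a ^ n - b ^ n) + (a - b) * b ^ n"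
    by (simp add: algebra_simps)
  then show ?case using Suc by (metis dvd_add dvd_mult dvd_triv_left)
qed

lemma ofip_0 [simp]: "ofip 0 = 0" by (simp add: ofip_def)
lemma ofip_1 [simp]: "ofip 1 = 1" by (simp add: ofip_def)
lemma coeff_ofip [simp]: "coeff (ofip p) n = of_int (coeff p n)"
  by (simp add: ofip_def coeff_map_poly)
lemma ofip_add [simp]: "ofip (p + q) = ofip p + ofip q"
  by (rule poly_eqI) simp
lemma ofip_diff [simp]: "ofip (p - q) = ofip p - ofip q"
  by (rule poly_eqI) simp
lemma ofip_mult [simp]: "ofip (p * q) = ofip p * ofip q"
  by (rule poly_eqI) (simp add: coeff_mult)
lemma ofip_power [simp]: "ofip (p ^ n) = ofip p ^ n"
  by (induction n) simp_all
lemma ofip_prod: "ofip (prod f A) = (\<Prod>x\<in>A. ofip (f x))"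
  by (induction A rule: infinite_finite_induct) simp_all
lemma ofip_monom [simp]: "ofip (monom c n) = monom (of_int c) n"
  by (simp add: ofip_def map_poly_monom)
lemma ofip_of_nat [simp]: "ofip (of_nat n) = of_nat n"
  by (rule poly_eqI) (simp add: of_nat_poly coeff_pCons split: nat.split)
lemma ofip_dvd: "p dvd q \<Longrightarrow> ofip p dvd ofip q"
  by (metis dvd_def ofip_mult)

lemma degree_xm:
  assumes "0 < n" "(1::'a::comm_ring_1) \<noteq> 0"
  shows "degree (monom 1 n - 1 :: 'a poly) = n"
proof (rule antisym)
  show "degree (monom 1 n - 1 :: 'a poly) \<le> n"
    by (rule order.trans[OF degree_diff_le]) (auto simp: degree_monom_le)
  have "coeff (monom 1 n - 1 :: 'a poly) n = 1" using assms by simp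
  then show "n \<le> degree (monom 1 n - 1 :: 'a poly)" using assms by (intro le_degree) simp
qed

lemma lead_xm:
  assumes "0 < n"
  shows "lead_coeff (monom 1 n - 1 :: 'a::comm_ring_1 poly) = 1"
proof (cases "(1::'a) = 0")
  case True then show ?thesis by (metis mult_1 mult_zero_left)
next
  case False then show ?thesis using assms by (simp add: degree_xm)
qed

lemma xm_dvd_mult: "(monom 1 a - 1 :: 'a::comm_ring_1 poly) dvd (monom 1 (a * k) - 1)"
proof -
  have "monom 1 (a * k) - 1 = (monom 1 a :: 'a poly) ^ k - 1 ^ k"
    by (simp add: monom_power)
  then show ?thesis using dvd_pow_sub by metis
qed

lemma xm_gcd:
  fixes h :: "'a::comm_ring_1 poly"
  assumes "h dvd monom 1 a - 1" "h dvd monom 1 b - 1" "a \<noteq> 0"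
  shows "h dvd monom 1 (gcd a b) - 1"
proof -
  obtain x y where xy: "a * x = b * y + gcd a b" using bezout_nat[OF assms(3)] by blast
  have h1: "h dvd monom 1 (a * x) - 1" using assms(1) xm_dvd_mult dvd_trans by blast
  have h2: "h dvd monom 1 (b * y) - 1" using assms(2) xm_dvd_mult dvd_trans by blast
  have "monom 1 (a * x) - 1 = monom 1 (gcd a b) * (monom 1 (b * y) - 1) + (monom 1 (gcd a b) - (1::'a poly))"
    by (simp add: xy algebra_simps mult_monom)
  then have "monom 1 (gcd a b) - (1::'a poly) = (monom 1 (a * x) - 1) - monom 1 (gcd a b) * (monom 1 (b * y) - 1)"
    by (simp add: algebra_simps)
  then show ?thesis using h1 h2 by (metis dvd_diff dvd_mult)
qed

lemma squarefree_xm: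
  fixes h :: "rat poly"
  assumes "h * h dvd monom 1 N - 1" "0 < N"
  shows "is_unit h"
proof -
  obtain w where w: "monom 1 N - 1 = h * h * w" using assms(1) by blast
  have "pderiv (monom 1 N - 1 :: rat poly) = monom (of_nat N) (N - 1)"
    by (simp add: pderiv_monom pderiv_diff)
  moreover have "pderiv (h * h * w) = h * (pderiv (h * w) + w * pderiv h)"
    by (simp add: pderiv_mult algebra_simps)
  ultimately have d1: "h dvd monom (of_nat N) (N - 1)" using w by (metis dvdI)
  have d2: "h dvd monom 1 N - 1" using assms(1) dvd_mult_left by blast
  have "monom 1 1 * monom (of_nat N) (N - 1) - smult (of_nat N) (monom 1 N - 1) = [:of_nat N :: rat:]"
    using assms(2) by (simp add: mult_monom smult_monom smult_diff_right monom_0)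
  moreover have "h dvd monom 1 1 * monom (of_nat N) (N - 1) - smult (of_nat N) (monom 1 N - 1)"
    using d1 d2 by (simp add: dvd_diff dvd_mult dvd_smult)
  ultimately have "h dvd [:of_nat N:]" by simp
  moreover have "[:of_nat N :: rat:] \<noteq> 0" using assms(2) by simp
  ultimately have "h \<noteq> 0" "degree h = 0"
    using dvd_imp_degree_le[of h "[:of_nat N:]"] by auto
  then show ?thesis by (simp add: is_unit_iff_degree)
qed


lemma prod_coprime_dvd:
  fixes f :: "'b \<Rightarrow> 'a::semiring_gcd"
  assumes "finite A" "\<And>a b. a \<in> A \<Longrightarrow> b \<in> A \<Longrightarrow> a \<noteq> b \<Longrightarrow> coprime (f a) (f b)"
    "\<And>a. a \<in> A \<Longrightarrow> f a dvd c"
  shows "prod f A dvd c"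
  using assms
proof (induction A rule: finite_induct)
  case empty then show ?case by simp
next
  case (insert a A)
  have "coprime (f a) (prod f A)"
    by (rule prod_coprime_right) (use insert in auto)
  then show ?case using insert by (simp add: divides_mult)
qed

lemma int_dvd_from_rat:
  fixes P f :: "int poly"
  assumes "lead_coeff P = 1" "(ofip P :: rat poly) dvd ofip f"
  shows "P dvd f"
proof -
  have P0: "P \<noteq> 0" using assms(1) by auto
  obtain q r where qr: "pseudo_divmod f P = (q, r)" by (cases "pseudo_divmod f P") auto
  have e: "f = P * q + r" using pseudo_divmod(1)[OF P0 qr] assms(1) by simp
  have dr: "r = 0 \<or> degree r < degree P" using pseudo_divmod(2)[OF P0 qr] .
  have inj: "degree (ofip p :: rat poly) = degree p" for p :: "int poly"
    unfolding ofip_def by (rule degree_map_poly) simp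
  have "(ofip P :: rat poly) dvd ofip r"
  proof -
    have "(ofip r :: rat poly) = ofip f - ofip P * ofip q" using e by simp
    then show ?thesis using assms(2) by (metis dvd_diff dvd_triv_left)
  qed
  moreover have z: "(ofip r :: rat poly) = 0 \<longleftrightarrow> r = 0"
    by (simp add: poly_eq_iff)
  ultimately have "r = 0"
  proof (cases "r = 0")
    case False
    assume d: "(ofip P :: rat poly) dvd ofip r"
    have "degree (ofip P :: rat poly) \<le> degree (ofip r :: rat poly)"
      using dvd_imp_degree_le[OF d] False z by blast
    then show ?thesis using dr inj[of P] inj[of r] by linarith
  qed
  then show ?thesis using e by simp
qed

lemma divs_finite: "0 < n \<Longrightarrow> finite (divs n)"
  unfolding divs_def by (rule finite_subset[of _ "{..n}"]) (auto dest: dvd_imp_le)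

lemma proper_divs: "0 < n \<Longrightarrow> {d. d dvd n \<and> d < n} = divs n - {n}"
  unfolding divs_def by (auto intro: Nat.gr0I)


lemma cyclo_main:
  "0 < n \<Longrightarrow> (\<Prod>k\<in>divs n. cyclo k) = monom 1 n - 1 \<and> lead_coeff (cyclo n) = 1"
proof (induction n rule: less_induct)
  case (less n)
  define D where "D = divs n - {n}"
  define P where "P = (\<Prod>k\<in>D. cyclo k)"
  have fin: "finite D" unfolding D_def using divs_finite[OF less.prems] by simp
  have Dlt: "k \<in> D \<Longrightarrow> 0 < k \<and> k < n \<and> k dvd n" for k
    unfolding D_def divs_def using less.prems by (auto dest: dvd_imp_le)
  have IH: "k \<in> D \<Longrightarrow> (\<Prod>k\<in>divs k. cyclo k) = monom 1 k - 1 \<and> lead_coeff (cyclo k) = 1" for k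
    using less.IH Dlt by blast
  have cyc: "cyclo n = (monom 1 n - 1) div P"
    unfolding P_def D_def using less.prems by (subst cyclo.simps) (simp add: proper_divs)
  have Pm: "lead_coeff P = 1" unfolding P_def lead_coeff_prod using IH by simp
  have IH': "0 < k \<Longrightarrow> k < n \<Longrightarrow> (\<Prod>k\<in>divs k. cyclo k) = monom 1 k - 1" for k
    using less.IH by blast
  have sub: "0 < k \<Longrightarrow> cyclo k * (\<Prod>i\<in>divs k - {k}. cyclo i) = (\<Prod>i\<in>divs k. cyclo i)" for k
    using divs_finite[of k] by (subst prod.remove[of _ k]) (auto simp: divs_def)
  define Q where "Q k = (ofip (cyclo k) :: rat poly)" for k
  have Qdvd: "k \<in> D \<Longrightarrow> Q k dvd monom 1 k - 1" for k
  proof -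
    assume k: "k \<in> D"
    have "cyclo k dvd monom 1 k - 1" using IH[OF k] sub[of k] Dlt[OF k] by (metis dvd_triv_left)
    then show ?thesis unfolding Q_def using ofip_dvd by fastforce
  qed
  have key: "is_unit h" if a: "a \<in> D" and b: "b \<in> D" and g: "gcd a b \<noteq> b"
      and ha: "h dvd Q a" and hb: "h dvd Q b" for a b h
  proof -
    have "h dvd monom 1 (gcd a b) - 1"
      using xm_gcd[of h a b] ha hb Qdvd[OF a] Qdvd[OF b] Dlt[OF a] dvd_trans by blast
    define g where "g = gcd a b"
    have gpos1: "g dvd b" unfolding g_def by simp
    have gpos2: "g \<le> b" using gpos1 Dlt[OF b] by (simp add: dvd_imp_le)
    have gne: "g \<noteq> b" using g unfolding g_def .
    have gpos3: "0 < g" unfolding g_def using Dlt[OF b] by simp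
    have gpos: "0 < g" "g < b" "g dvd b"
      using gpos1 gpos2 gne gpos3 by simp_all
    have "divs g \<subseteq> divs b - {b}" using gpos unfolding divs_def by (auto intro: dvd_trans)
    then have "(\<Prod>i\<in>divs g. cyclo i) dvd (\<Prod>i\<in>divs b - {b}. cyclo i)"
      using divs_finite[of b] Dlt[OF b] by (intro prod_dvd_prod_subset) auto
    then have "monom 1 g - 1 dvd (\<Prod>i\<in>divs b - {b}. cyclo i)"
      using IH'[of g] gpos Dlt[OF b] by auto
    then have "h dvd ofip (\<Prod>i\<in>divs b - {b}. cyclo i)"
      using \<open>h dvd monom 1 (gcd a b) - 1\<close> ofip_dvd unfolding g_def by fastforce
    then have "h * h dvd Q b * ofip (\<Prod>i\<in>divs b - {b}. cyclo i)"
      using hb by (simp add: mult_dvd_mono)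
    also have "Q b * ofip (\<Prod>i\<in>divs b - {b}. cyclo i) = monom 1 b - 1"
      unfolding Q_def using sub[of b] IH[OF b] Dlt[OF b] by (metis ofip_mult ofip_1 ofip_diff ofip_monom of_int_1)
    finally show ?thesis using squarefree_xm Dlt[OF b] by blast
  qed
  have cop: "coprime (Q a) (Q b)" if "a \<in> D" "b \<in> D" "a \<noteq> b" for a b
  proof (rule coprimeI)
    fix h assume h: "h dvd Q a" "h dvd Q b"
    show "is_unit h"
    proof (cases "gcd a b = b")
      case False then show ?thesis using key that h by blast
    next
      case True
      then have "gcd b a \<noteq> a" using that by (simp add: gcd.commute)
      then show ?thesis using key that h by blast
    qed
  qed
  have Qn: "Q k dvd monom 1 n - 1" if "k \<in> D" for k
    using Qdvd[OF that] xm_dvd_mult[of k] Dlt[OF that] by (metis dvd_trans dvd_def)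
  have "prod Q D dvd monom 1 n - 1"
    by (rule prod_coprime_dvd[of D Q]) (use fin cop Qn in auto)
  then have "(ofip P :: rat poly) dvd ofip (monom 1 n - 1)"
    unfolding P_def Q_def ofip_prod by simp
  then have Pd: "P dvd monom 1 n - 1" using int_dvd_from_rat Pm by blast
  have P0: "P \<noteq> 0" using Pm by auto
  have e: "cyclo n * P = monom 1 n - 1" using cyc Pd P0 by simp
  have "(\<Prod>k\<in>divs n. cyclo k) = cyclo n * P"
    unfolding P_def D_def using sub[OF less.prems] by simp
  moreover have "lead_coeff (cyclo n) = 1"
    using e Pm lead_xm[OF less.prems, where 'a=int] by (metis lead_coeff_mult mult.right_neutral)
  ultimately show ?case using e by simp
qed


definition E :: "nat \<Rightarrow> int poly" where "E d = (\<Prod>k\<in>divs d. cyclo k)"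

lemma E_eq: "0 < d \<Longrightarrow> E d = monom 1 d - 1"
  unfolding E_def using cyclo_main by blast

lemma ofip_E: "0 < d \<Longrightarrow> ofip (E d) = (monom 1 d - 1 :: 'a::comm_ring_1 poly)"
  by (simp add: E_eq)

lemma Phi_star_1: "1 \<in> Phi_star S"
  unfolding Phi_star_def by (rule CollectI, rule exI[of _ "{#}"]) simp

lemma Phi_star_mult: "f \<in> Phi_star S \<Longrightarrow> g \<in> Phi_star S \<Longrightarrow> f * g \<in> Phi_star S"
  unfolding Phi_star_def
proof (clarify)
  fix M N assume "set_mset M \<subseteq> S" "set_mset N \<subseteq> S"
  then show "\<exists>K. prod_mset (image_mset cyclo M) * prod_mset (image_mset cyclo N) = prod_mset (image_mset cyclo K) \<and> set_mset K \<subseteq> S"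
    by (intro exI[of _ "M + N"]) auto
qed

lemma Phi_star_power: "f \<in> Phi_star S \<Longrightarrow> f ^ n \<in> Phi_star S"
  by (induction n) (simp_all add: Phi_star_1 Phi_star_mult)

lemma Phi_star_mono: "S \<subseteq> T \<Longrightarrow> Phi_star S \<subseteq> Phi_star T"
  unfolding Phi_star_def by blast

lemma lim_elem_mono: "S \<subseteq> T \<Longrightarrow> lim_elem T x \<Longrightarrow> lim_elem S x"
  unfolding lim_elem_def using Phi_star_mono by blast

lemma lim_eq_mono: "S \<subseteq> T \<Longrightarrow> lim_eq T x y \<Longrightarrow> lim_eq S x y"
  unfolding lim_eq_def using Phi_star_mono by blast

lemma E_in: "0 < d \<Longrightarrow> E d \<in> Phi_star (divs d)"
  unfolding Phi_star_def E_def
  by (rule CollectI, rule exI[of _ "mset_set (divs d)"]) (simp add: divs_finite prod_unfold_prod_mset)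

lemma Phi_star_dvd_E:
  assumes "0 < d" "f \<in> Phi_star (divs d)"
  shows "\<exists>L. f dvd E d ^ L"
proof -
  obtain M where M: "f = prod_mset (image_mset cyclo M)" "set_mset M \<subseteq> divs d"
    using assms(2) unfolding Phi_star_def by blast
  have "prod_mset (image_mset cyclo M) dvd E d ^ size M" using M(2)
  proof (induction M)
    case empty then show ?case by simp
  next
    case (add k M)
    have "cyclo k dvd E d" unfolding E_def using add.prems divs_finite[OF assms(1)]
      by (intro dvd_prodI) auto
    moreover have "prod_mset (image_mset cyclo M) dvd E d ^ size M" using add by auto
    ultimately show ?case by (simp add: mult_dvd_mono)
  qed
  then show ?thesis using M by blast
qed

lemma divs_1: "divs 1 = {1}" unfolding divs_def by auto

lemma one_in_divs: "0 < n \<Longrightarrow> 1 \<in> divs n" unfolding divs_def by auto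

lemma divs_mono: "0 < n \<Longrightarrow> m dvd n \<Longrightarrow> divs m \<subseteq> divs n"
  unfolding divs_def by (auto intro: dvd_trans)

lemma lim_eq_E:
  assumes "0 < d" "lim_elem (divs d) x" "lim_elem (divs d) y"
    "\<And>L. ofip (E d ^ L) dvd x (E d ^ L) - y (E d ^ L)"
  shows "lim_eq (divs d) x y"
  unfolding lim_eq_def
proof
  fix f assume f: "f \<in> Phi_star (divs d)"
  obtain L where L: "f dvd E d ^ L" using Phi_star_dvd_E[OF assms(1) f] by blast
  have EL: "E d ^ L \<in> Phi_star (divs d)" using E_in[OF assms(1)] by (rule Phi_star_power)
  have 1: "ofip f dvd x (E d ^ L) - x f" using assms(2) f EL L unfolding lim_elem_def by blast
  have 2: "ofip f dvd y (E d ^ L) - y f" using assms(3) f EL L unfolding lim_elem_def by blast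
  have 3: "ofip f dvd x (E d ^ L) - y (E d ^ L)" using assms(4)[of L] ofip_dvd[OF L] dvd_trans by blast
  have "x f - y f = (x (E d ^ L) - y (E d ^ L)) - (x (E d ^ L) - x f) + (y (E d ^ L) - y f)"
    by (simp add: algebra_simps)
  then show "ofip f dvd x f - y f" using 1 2 3 by (metis dvd_add dvd_diff)
qed

lemma monic_unique:
  fixes g w :: "'a::comm_ring_1 poly"
  assumes "lead_coeff g = 1" "(1::'a) \<noteq> 0" "degree (g * w) < degree g"
  shows "w = 0"
proof (rule ccontr)
  assume "w \<noteq> 0"
  have "coeff (g * w) (degree g + degree w) = lead_coeff w"
    using coeff_mult_degree_sum[of g w] assms(1) by simp
  then have "coeff (g * w) (degree g + degree w) \<noteq> 0" using \<open>w \<noteq> 0\<close> by simp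
  then have "degree g + degree w \<le> degree (g * w)" by (rule le_degree)
  then show False using assms(3) by simp
qed

lemma monic_sep:
  fixes g a :: "'a::comm_ring_1 poly"
  assumes g: "lead_coeff g = 1" and sep: "padic_separated p TYPE('a)"
    and h: "\<And>j. \<exists>u v. a = g * u + (of_nat p) ^ j * v"
  shows "g dvd a"
proof (cases "(1::'a) = 0")
  case True
  then have "(1::'a poly) = 0" by (simp add: one_pCons)
  then have "\<And>x::'a poly. x = 0" by (metis mult_1_right mult_zero_right)
  then show ?thesis by (metis dvd_0_right)
next
  case nz: False
  have g0: "g \<noteq> 0" using g nz by auto
  show ?thesis
  proof (cases "degree g = 0")
    case True
    then have "g = [:lead_coeff g:]" by (metis degree_0_id)
    then have "g = 1" using g by (simp add: one_pCons)
    then show ?thesis by simp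
  next
    case dpos: False
    have div: "\<exists>q r. b = g * q + r \<and> degree r < degree g" for b
    proof -
      obtain q r where qr: "pseudo_divmod b g = (q, r)" by (cases "pseudo_divmod b g") auto
      have "b = g * q + r" using pseudo_divmod(1)[OF g0 qr] g by simp
      moreover have "degree r < degree g" using pseudo_divmod(2)[OF g0 qr] dpos by auto
      ultimately show ?thesis by blast
    qed
    obtain q r where qr: "a = g * q + r" "degree r < degree g" using div by blast
    have "coeff r i = 0" for i
    proof -
      have "(of_nat p :: 'a) ^ j dvd coeff r i" for j
      proof -
        obtain u v where uv: "a = g * u + (of_nat p) ^ j * v" using h by blast
        obtain q' r' where qr': "v = g * q' + r'" "degree r' < degree g" using div by blast
        define c :: 'a where "c = of_nat p ^ j"
        have "(of_nat p :: 'a poly) ^ j = of_nat (p ^ j)" by (rule of_nat_power[symmetric])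
        also have "\<dots> = [:c:]" unfolding c_def of_nat_poly by simp
        finally have pc: "(of_nat p :: 'a poly) ^ j = [:c:]" .
        have e: "g * (q - u - [:c:] * q') = smult c r' - r"
          using qr uv qr' pc by (simp add: algebra_simps)
        have "degree (smult c r' - r) \<le> degree g - 1"
          by (rule degree_diff_le) (use qr(2) qr'(2) degree_smult_le[of c r'] in linarith)+
        then have "degree (smult c r' - r) < degree g" using dpos by linarith
        then have "q - u - [:c:] * q' = 0" using monic_unique[OF g nz] e by metis
        then have "smult c r' = r" using e by simp
        then have "coeff r i = c * coeff r' i" by auto
        then show ?thesis unfolding c_def by simp
      qed
      then show ?thesis using sep unfolding padic_separated_def by blast
    qed
    then have "r = 0" by (simp add: poly_eq_iff)
    then show ?thesis using qr by simp
  qed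
qed


lemma frosh_m1:
  fixes a :: "'b::comm_ring_1"
  assumes p: "prime p"
  shows "\<exists>h. (a - 1) ^ p = (a ^ p - 1) + of_nat p * h"
proof -
  obtain m where m: "p = Suc m" using prime_gt_0_nat[OF p] by (cases p) auto
  define f where "f k = of_nat (p choose k) * a ^ k * (- 1 :: 'b) ^ (p - k)" for k
  have bin: "(a - 1) ^ p = (\<Sum>k\<le>p. f k)"
    using binomial_ring[of a "-1" p] unfolding f_def by simp
  have s1: "(\<Sum>k\<le>p. f k) = f 0 + (\<Sum>k\<le>m. f (Suc k))"
    unfolding m by (rule sum.atMost_Suc_shift)
  have s2: "(\<Sum>k\<le>m. f (Suc k)) = (\<Sum>k<m. f (Suc k)) + f p"
    by (simp add: lessThan_Suc_atMost[symmetric] m)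
  have mid: "f (Suc k) = of_nat p * (of_nat ((p choose Suc k) div p) * a ^ Suc k * (- 1) ^ (p - Suc k))"
    if "k < m" for k
  proof -
    have "p dvd (p choose Suc k)" using that m p by (intro dvd_choose_prime) auto
    then have "(p choose Suc k) = p * ((p choose Suc k) div p)" by simp
    then have "(of_nat (p choose Suc k) :: 'b) = of_nat p * of_nat ((p choose Suc k) div p)"
      by (metis of_nat_mult)
    then show ?thesis unfolding f_def by (simp add: mult.assoc)
  qed
  have s3: "(\<Sum>k<m. f (Suc k)) = of_nat p * (\<Sum>k<m. of_nat ((p choose Suc k) div p) * a ^ Suc k * (- 1) ^ (p - Suc k))"
    by (simp add: sum_distrib_left mid)
  have fp: "f p = a ^ p" unfolding f_def by simp
  have f0: "f 0 = (- 1) ^ p" unfolding f_def by simp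
  obtain c where c: "(- 1 :: 'b) ^ p = - 1 + of_nat p * c"
  proof (cases "p = 2")
    case True then show ?thesis using that[of 1] by simp
  next
    case False
    then have "odd p" using prime_odd_nat[OF p] prime_ge_2_nat[OF p] by linarith
    then show ?thesis using that[of 0] by simp
  qed
  show ?thesis
    by (rule exI[of _ "c + (\<Sum>k<m. of_nat ((p choose Suc k) div p) * a ^ Suc k * (- 1) ^ (p - Suc k))"])
       (simp add: bin s1 s2 s3 fp f0 c algebra_simps)
qed

lemma pow_cong:
  fixes G F h :: "'b::comm_ring_1"
  assumes "G ^ p = F + of_nat p * h"
  shows "\<exists>u v. G ^ (p * L * j + L) = F ^ L * u + (of_nat p) ^ j * v"
proof -
  have "((F + of_nat p * h) - F) dvd (F + of_nat p * h) ^ L - F ^ L" by (rule dvd_pow_sub)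
  then obtain h1 where h1: "(F + of_nat p * h) ^ L - F ^ L = (of_nat p * h) * h1" by auto
  define hh where "hh = h * h1"
  have "G ^ (p * L) = (F + of_nat p * h) ^ L" by (simp only: power_mult assms)
  also have "\<dots> = F ^ L + of_nat p * hh"
    using h1 unfolding hh_def diff_eq_eq by (simp add: algebra_simps)
  finally have "G ^ (p * L) = F ^ L + of_nat p * hh" .
  then have GpL: "G ^ (p * L * j) = (F ^ L + of_nat p * hh) ^ j"
    by (simp only: power_mult)
  have "((F ^ L + of_nat p * hh) - of_nat p * hh) dvd (F ^ L + of_nat p * hh) ^ j - (of_nat p * hh) ^ j"
    by (rule dvd_pow_sub)
  then obtain w where w: "(F ^ L + of_nat p * hh) ^ j - (of_nat p * hh) ^ j = F ^ L * w" by auto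
  have "G ^ (p * L * j + L) = (F ^ L * w + (of_nat p) ^ j * hh ^ j) * G ^ L"
    using GpL w by (simp add: power_add power_mult_distrib algebra_simps eq_diff_eq)
  then show ?thesis
    by (intro exI[of _ "w * G ^ L"] exI[of _ "hh ^ j * G ^ L"]) (simp add: algebra_simps)
qed

lemma monic_mult:
  fixes g h :: "'a::comm_ring_1 poly"
  assumes "lead_coeff g = 1" "lead_coeff h = 1"
  shows "lead_coeff (g * h) = 1"
proof (cases "(1::'a) = 0")
  case True then show ?thesis by (metis mult_1 mult_zero_left)
next
  case False
  have c: "coeff (g * h) (degree g + degree h) = 1"
    using coeff_mult_degree_sum[of g h] assms by simp
  then have "degree g + degree h \<le> degree (g * h)" using False by (intro le_degree) simp
  then have "degree (g * h) = degree g + degree h" using degree_mult_le[of g h] by linarith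
  then show ?thesis using c by simp
qed

lemma monic_power: "lead_coeff (g :: 'a::comm_ring_1 poly) = 1 \<Longrightarrow> lead_coeff (g ^ n) = 1"
  by (induction n) (simp_all add: monic_mult)

lemma step:
  fixes x y :: "int poly \<Rightarrow> 'a::comm_ring_1 poly"
  assumes m: "0 < m" and p: "prime p" and sep: "padic_separated p TYPE('a)"
    and x: "lim_elem (divs (m * p)) x" and y: "lim_elem (divs (m * p)) y"
    and eq: "lim_eq (divs m) x y"
  shows "lim_eq (divs (m * p)) x y"
proof -
  have mp: "0 < m * p" using m prime_gt_0_nat[OF p] by simp
  define Fz where "Fz = E (m * p)"
  define Gz where "Gz = E m"
  define F where "F = (monom 1 (m * p) - 1 :: 'a poly)"
  define G where "G = (monom 1 m - 1 :: 'a poly)"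
  have oF: "ofip Fz = F" unfolding Fz_def F_def using ofip_E[OF mp] by simp
  have oG: "ofip Gz = G" unfolding Gz_def G_def using ofip_E[OF m] by simp
  obtain h where h: "G ^ p = F + of_nat p * h"
    using frosh_m1[OF p, of "monom 1 m :: 'a poly"] unfolding G_def F_def
    by (auto simp: monom_power)
  have Fm: "lead_coeff F = 1" unfolding F_def using lead_xm[OF mp] .
  have sub: "divs m \<subseteq> divs (m * p)" using divs_mono[OF mp] by simp
  have FzP: "Fz \<in> Phi_star (divs (m * p))" unfolding Fz_def by (rule E_in[OF mp])
  have GzP: "Gz \<in> Phi_star (divs m)" unfolding Gz_def by (rule E_in[OF m])
  have GzP': "Gz \<in> Phi_star (divs (m * p))" using GzP Phi_star_mono[OF sub] by blast
  have GF: "Gz dvd Fz" unfolding Gz_def Fz_def E_def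
    by (rule prod_dvd_prod_subset[OF divs_finite[OF mp] sub])
  show ?thesis
  proof (rule lim_eq_E[OF mp x y])
    fix L
    define a where "a = x (Fz ^ L) - y (Fz ^ L)"
    have "F ^ L dvd a"
    proof (rule monic_sep[OF monic_power[OF Fm] sep])
      fix j
      define N where "N = p * L * j + L"
      obtain u v where uv: "G ^ N = F ^ L * u + (of_nat p) ^ j * v"
        using pow_cong[OF h] unfolding N_def by blast
      define b where "b = x (Fz ^ N) - y (Fz ^ N)"
      have LN: "Fz ^ L dvd Fz ^ N" unfolding N_def by (rule le_imp_power_dvd) simp
      have P1: "Fz ^ L \<in> Phi_star (divs (m * p))" "Fz ^ N \<in> Phi_star (divs (m * p))"
        using FzP by (simp_all add: Phi_star_power)
      have x1: "F ^ L dvd x (Fz ^ N) - x (Fz ^ L)"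
        using x P1 LN oF unfolding lim_elem_def by fastforce
      have y1: "F ^ L dvd y (Fz ^ N) - y (Fz ^ L)"
        using y P1 LN oF unfolding lim_elem_def by fastforce
      have "F ^ L dvd b - a"
      proof -
        have "b - a = (x (Fz ^ N) - x (Fz ^ L)) - (y (Fz ^ N) - y (Fz ^ L))"
          unfolding a_def b_def by (simp add: algebra_simps)
        then show ?thesis using x1 y1 by simp
      qed
      then obtain w where w: "b - a = F ^ L * w" by auto
      have GN: "Gz ^ N dvd Fz ^ N" using GF by (rule dvd_power_same)
      have P2: "Gz ^ N \<in> Phi_star (divs m)" "Gz ^ N \<in> Phi_star (divs (m * p))"
        using GzP GzP' by (simp_all add: Phi_star_power)
      have e1: "G ^ N dvd x (Gz ^ N) - y (Gz ^ N)"
        using eq P2 oG unfolding lim_eq_def by fastforce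
      have x2: "G ^ N dvd x (Fz ^ N) - x (Gz ^ N)"
        using x P2 P1 GN oG unfolding lim_elem_def by fastforce
      have y2: "G ^ N dvd y (Fz ^ N) - y (Gz ^ N)"
        using y P2 P1 GN oG unfolding lim_elem_def by fastforce
      have "G ^ N dvd b"
      proof -
        have eqb: "b = (x (Fz ^ N) - x (Gz ^ N)) - (y (Fz ^ N) - y (Gz ^ N)) + (x (Gz ^ N) - y (Gz ^ N))"
          unfolding b_def by (simp add: algebra_simps)
        show ?thesis unfolding eqb by (intro dvd_add dvd_diff x2 y2 e1)
      qed
      then obtain c where c: "b = G ^ N * c" by auto
      have "a = F ^ L * (u * c - w) + (of_nat p) ^ j * (v * c)"
      proof -
        have "a = b - F ^ L * w" using w by (simp add: algebra_simps)
        also have "\<dots> = F ^ L * (u * c - w) + (of_nat p) ^ j * (v * c)"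
          using c uv by (simp add: algebra_simps)
        finally show ?thesis .
      qed
      then show "\<exists>u v. a = F ^ L * u + (of_nat p) ^ j * v" by blast
    qed
    then show "ofip (E (m * p) ^ L) dvd x (E (m * p) ^ L) - y (E (m * p) ^ L)"
      unfolding a_def Fz_def[symmetric] using oF by simp
  qed
qed

lemma inj_n:
  fixes x y :: "int poly \<Rightarrow> 'a::comm_ring_1 poly"
  assumes "0 < n" "\<forall>p. prime p \<longrightarrow> p dvd n \<longrightarrow> padic_separated p TYPE('a)"
    "lim_elem (divs n) x" "lim_elem (divs n) y" "lim_eq (divs 1) x y"
  shows "lim_eq (divs n) x y"
  using assms
proof (induction n rule: less_induct)
  case (less n)
  show ?case
  proof (cases "n = 1")
    case True then show ?thesis using less.prems by simp
  next
    case False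
    obtain p where p: "prime p" "p dvd n" using prime_factor_nat[OF False] by blast
    define m where "m = n div p"
    have nm: "n = m * p" unfolding m_def using p by simp
    have m0: "0 < m" using less.prems(1) nm by (simp add: Nat.gr0I)
    have mn: "m < n" using nm m0 prime_ge_2_nat[OF p(1)] by simp
    have sub: "divs m \<subseteq> divs n" using divs_mono[OF less.prems(1)] nm by simp
    have "lim_eq (divs m) x y"
    proof (rule less.IH[OF mn m0])
      show "\<forall>q. prime q \<longrightarrow> q dvd m \<longrightarrow> padic_separated q TYPE('a)"
        using less.prems(2) nm by (metis dvd_mult2)
      show "lim_elem (divs m) x" "lim_elem (divs m) y"
        using lim_elem_mono[OF sub] less.prems by auto
      show "lim_eq (divs 1) x y" using less.prems by simp
    qed
    moreover have "padic_separated p TYPE('a)" using less.prems(2) p by blast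
    ultimately have "lim_eq (divs (m * p)) x y"
      using step[OF m0 p(1), of x y] less.prems nm by auto
    then show ?thesis using nm by simp
  qed
qed


lemma find_n:
  assumes ne: "S \<noteq> {}" and pos: "\<forall>n\<in>S. 0 < n"
    and dir: "\<forall>a\<in>S. \<forall>b\<in>S. \<exists>c\<in>S. a dvd c \<and> b dvd c"
    and f: "f \<in> Phi_star S"
  shows "\<exists>n\<in>S. f \<in> Phi_star (divs n)"
proof -
  obtain M where M: "f = prod_mset (image_mset cyclo M)" "set_mset M \<subseteq> S"
    using f unfolding Phi_star_def by blast
  have "\<exists>n\<in>S. \<forall>k\<in>A. k dvd n" if "finite A" "A \<subseteq> S" for A
    using that
  proof (induction A rule: finite_induct)
    case empty then show ?case using ne by auto
  next
    case (insert k A)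
    then obtain n where n: "n \<in> S" "\<forall>k\<in>A. k dvd n" by auto
    obtain c where c: "c \<in> S" "k dvd c" "n dvd c" using dir insert.prems n(1) by blast
    then show ?case using n by (auto intro: dvd_trans)
  qed
  then obtain n where n: "n \<in> S" "\<forall>k\<in>set_mset M. k dvd n" using M(2) by blast
  have "set_mset M \<subseteq> divs n" using n M(2) pos unfolding divs_def by auto
  then show ?thesis using n(1) M(1) unfolding Phi_star_def by blast
qed

definition INJ :: "'a::comm_ring_1 itself \<Rightarrow> nat \<Rightarrow> bool" where
  "INJ R n \<longleftrightarrow> (\<forall>x y :: int poly \<Rightarrow> 'a poly. lim_elem (divs n) x \<longrightarrow> lim_elem (divs n) y \<longrightarrow>
               lim_eq (divs 1) x y \<longrightarrow> lim_eq (divs n) x y)"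

lemma INJ_D:
  fixes x y :: "int poly \<Rightarrow> 'a::comm_ring_1 poly"
  assumes "INJ TYPE('a) n" "lim_elem (divs n) x" "lim_elem (divs n) y" "lim_eq (divs 1) x y"
  shows "lim_eq (divs n) x y"
  using assms unfolding INJ_def by blast

lemma gen_parts:
  fixes S :: "nat set"
  assumes ne: "S \<noteq> {}" and pos: "\<forall>n\<in>S. 0 < n"
    and dir: "\<forall>a\<in>S. \<forall>b\<in>S. \<exists>c\<in>S. a dvd c \<and> b dvd c"
    and dv: "\<forall>n\<in>S. divs n \<subseteq> S"
    and inj: "\<forall>n\<in>S. INJ TYPE('a::comm_ring_1) n"
  shows "(\<forall>m\<in>S. \<forall>n\<in>S. m dvd n \<longrightarrow>
            (\<forall>x y :: int poly \<Rightarrow> 'a poly. lim_elem (divs n) x \<longrightarrow> lim_elem (divs n) y \<longrightarrow>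
               lim_eq (divs m) x y \<longrightarrow> lim_eq (divs n) x y))
       \<and> (\<forall>x y :: int poly \<Rightarrow> 'a poly. lim_elem S x \<longrightarrow> lim_elem S y \<longrightarrow>
               lim_eq (divs 1) x y \<longrightarrow> lim_eq S x y)
       \<and> (\<forall>z :: int poly \<Rightarrow> 'a poly. lim_elem (divs 1) z \<longrightarrow>
            ((\<exists>x. lim_elem S x \<and> lim_eq (divs 1) x z) \<longleftrightarrow>
             (\<forall>n\<in>S. \<exists>y. lim_elem (divs n) y \<and> lim_eq (divs 1) y z)))"
proof (intro conjI)
  have one: "1 \<in> S" using ne pos dv one_in_divs by blast
  show "\<forall>m\<in>S. \<forall>n\<in>S. m dvd n \<longrightarrow>
            (\<forall>x y :: int poly \<Rightarrow> 'a poly. lim_elem (divs n) x \<longrightarrow> lim_elem (divs n) y \<longrightarrow>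
               lim_eq (divs m) x y \<longrightarrow> lim_eq (divs n) x y)"
  proof (intro ballI impI allI)
    fix m n and x y :: "int poly \<Rightarrow> 'a poly"
    assume "m \<in> S" "n \<in> S" "m dvd n" "lim_elem (divs n) x" "lim_elem (divs n) y" "lim_eq (divs m) x y"
    moreover have "divs 1 \<subseteq> divs m" using \<open>m \<in> S\<close> pos divs_mono[of m 1] by simp
    ultimately show "lim_eq (divs n) x y"
      using INJ_D[OF inj[rule_format, OF \<open>n \<in> S\<close>]] lim_eq_mono[of "divs 1" "divs m" x y] by blast
  qed
  show "\<forall>x y :: int poly \<Rightarrow> 'a poly. lim_elem S x \<longrightarrow> lim_elem S y \<longrightarrow>
               lim_eq (divs 1) x y \<longrightarrow> lim_eq S x y"
  proof (intro allI impI)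
    fix x y :: "int poly \<Rightarrow> 'a poly"
    assume x: "lim_elem S x" and y: "lim_elem S y" and e: "lim_eq (divs 1) x y"
    show "lim_eq S x y" unfolding lim_eq_def
    proof
      fix f assume f: "f \<in> Phi_star S"
      obtain n where n: "n \<in> S" "f \<in> Phi_star (divs n)" using find_n[OF ne pos dir f] by blast
      have "lim_eq (divs n) x y"
        using INJ_D[OF inj[rule_format, OF n(1)]] lim_elem_mono[OF dv[rule_format, OF n(1)]] x y e by blast
      then show "ofip f dvd x f - y f" using n(2) unfolding lim_eq_def by blast
    qed
  qed
  show "\<forall>z :: int poly \<Rightarrow> 'a poly. lim_elem (divs 1) z \<longrightarrow>
            ((\<exists>x. lim_elem S x \<and> lim_eq (divs 1) x z) \<longleftrightarrow>
             (\<forall>n\<in>S. \<exists>y. lim_elem (divs n) y \<and> lim_eq (divs 1) y z))"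
  proof (intro allI impI iffI)
    fix z :: "int poly \<Rightarrow> 'a poly"
    assume "\<exists>x. lim_elem S x \<and> lim_eq (divs 1) x z"
    then obtain x where x: "lim_elem S x" "lim_eq (divs 1) x z" by blast
    show "\<forall>n\<in>S. \<exists>y. lim_elem (divs n) y \<and> lim_eq (divs 1) y z"
    proof
      fix n assume "n \<in> S"
      then have "lim_elem (divs n) x" using lim_elem_mono[OF dv[rule_format, OF \<open>n \<in> S\<close>] x(1)] by blast
      then show "\<exists>y. lim_elem (divs n) y \<and> lim_eq (divs 1) y z" using x(2) by blast
    qed
  next
    fix z :: "int poly \<Rightarrow> 'a poly"
    assume z: "lim_elem (divs 1) z" and H: "\<forall>n\<in>S. \<exists>y. lim_elem (divs n) y \<and> lim_eq (divs 1) y z"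
    obtain Y where Y: "\<And>n. n \<in> S \<Longrightarrow> lim_elem (divs n) (Y n) \<and> lim_eq (divs 1) (Y n) z"
      using H by metis
    define Nf where "Nf f = (SOME n. n \<in> S \<and> f \<in> Phi_star (divs n))" for f
    have Nf: "Nf f \<in> S \<and> f \<in> Phi_star (divs (Nf f))" if "f \<in> Phi_star S" for f
      unfolding Nf_def by (rule someI_ex) (use find_n[OF ne pos dir that] in blast)
    define x where "x f = Y (Nf f) f" for f
    have agree: "ofip f dvd Y n f - Y c f"
      if "n \<in> S" "c \<in> S" "n dvd c" "f \<in> Phi_star (divs n)" for n c f
    proof -
      have sub: "divs n \<subseteq> divs c" using divs_mono pos that by blast
      have "lim_eq (divs 1) (Y n) (Y c)"
        unfolding lim_eq_def
      proof
        fix g assume "g \<in> Phi_star (divs 1)"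
        then have d1: "ofip g dvd Y n g - z g" and d2: "ofip g dvd Y c g - z g"
          using Y[OF that(1)] Y[OF that(2)] unfolding lim_eq_def by blast+
        have "Y n g - Y c g = (Y n g - z g) - (Y c g - z g)" by simp
        then show "ofip g dvd Y n g - Y c g" using d1 d2 by (metis dvd_diff)
      qed
      moreover have "lim_elem (divs n) (Y c)" using Y[OF that(2)] lim_elem_mono[OF sub] by blast
      ultimately have "lim_eq (divs n) (Y n) (Y c)"
        using INJ_D[OF inj[rule_format, OF that(1)]] Y[OF that(1)] by blast
      then show ?thesis using that(4) unfolding lim_eq_def by blast
    qed
    have "lim_elem S x" unfolding lim_elem_def
    proof (intro ballI impI)
      fix f g assume f: "f \<in> Phi_star S" and g: "g \<in> Phi_star S" and fg: "f dvd g"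
      obtain c where c: "c \<in> S" "Nf f dvd c" "Nf g dvd c" using dir Nf[OF f] Nf[OF g] by blast
      have s1: "Phi_star (divs (Nf f)) \<subseteq> Phi_star (divs c)" "Phi_star (divs (Nf g)) \<subseteq> Phi_star (divs c)"
        using Phi_star_mono divs_mono pos c by auto
      have a1: "ofip f dvd Y (Nf f) f - Y c f" using agree Nf[OF f] c by blast
      have a2: "ofip g dvd Y (Nf g) g - Y c g" using agree Nf[OF g] c by blast
      have a3: "ofip f dvd Y c g - Y c f"
        using Y[OF c(1)] Nf[OF f] Nf[OF g] s1 fg unfolding lim_elem_def by blast
      have a2': "ofip f dvd Y (Nf g) g - Y c g" using a2 ofip_dvd[OF fg] dvd_trans by blast
      have "x g - x f = (Y (Nf g) g - Y c g) + (Y c g - Y c f) - (Y (Nf f) f - Y c f)"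
        unfolding x_def by (simp add: algebra_simps)
      then show "ofip f dvd x g - x f" using a1 a2' a3 by (metis dvd_add dvd_diff)
    qed
    moreover have "lim_eq (divs 1) x z" unfolding lim_eq_def
    proof
      fix f assume f: "f \<in> Phi_star (divs 1)"
      have "divs 1 \<subseteq> S" using dv one by blast
      then have fS: "f \<in> Phi_star S" using f Phi_star_mono by blast
      have "lim_eq (divs 1) (Y (Nf f)) z" using Y Nf[OF fS] by blast
      then show "ofip f dvd x f - z f" unfolding x_def lim_eq_def using f by blast
    qed
    ultimately show "\<exists>x. lim_elem S x \<and> lim_eq (divs 1) x z" by blast
  qed
qed

lemma adm_sep:
  assumes adm: "admissible TYPE('a::comm_ring_1) S" and n: "n \<in> S" and p: "prime p" "p dvd n"
  shows "padic_separated p TYPE('a)"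
proof (rule ccontr)
  assume ns: "\<not> padic_separated p TYPE('a)"
  have nt: "(UNIV :: 'a set) \<noteq> {0}"
  proof
    assume "(UNIV :: 'a set) = {0}"
    then have "padic_separated p TYPE('a)" unfolding padic_separated_def by auto
    then show False using ns by simp
  qed
  have ne: "S \<noteq> {}" and dv: "\<forall>n\<in>S. divs n \<subseteq> S" and pos: "S \<subseteq> {k. 0 < k}"
    using adm unfolding admissible_def by auto
  have one: "1 \<in> S" using ne pos dv one_in_divs by blast
  have ch: "(\<lambda>x y. x \<in> S \<and> y \<in> S \<and> rel_R TYPE('a) x y)\<^sup>*\<^sup>* 1 n"
    using adm one n unfolding admissible_def by blast
  have "\<not> p dvd n"
    using ch
  proof (induction rule: rtranclp_induct)
    case base then show ?case using p(1) by (auto simp: nat_dvd_1_iff_1)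
  next
    case (step y z)
    have r: "rel_R TYPE('a) y z" using step by blast
    show ?case
    proof
      assume pz: "p dvd z"
      from r nt show False unfolding rel_R_def
      proof (elim disjE exE conjE)
        assume "y = z" then show False using step pz by simp
      next
        fix q i assume q: "prime q" "padic_separated q TYPE('a)" "y = z * q ^ i"
        then show False using step pz by simp
      next
        fix q i assume q: "prime q" "padic_separated q TYPE('a)" "z = y * q ^ i"
        have "p \<noteq> q" using q ns by blast
        have "p dvd y \<or> p dvd q ^ i" using pz q(3) p(1) by (simp add: prime_dvd_mult_iff)
        moreover have "\<not> p dvd q ^ i"
        proof
          assume "p dvd q ^ i"
          then have "p dvd q" using p(1) prime_dvd_power by blast
          then show False using \<open>p \<noteq> q\<close> p(1) q(1) primes_dvd_imp_eq by blast
        qed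
        ultimately show False using step by blast
      next
        assume "(UNIV :: 'a set) = {0}" then show False using nt by simp
      qed
    qed
  qed
  then show False using p by simp
qed

lemma int_sep: "prime p \<Longrightarrow> padic_separated p TYPE(int)"
  unfolding padic_separated_def
proof (intro allI impI)
  fix x :: int assume p: "prime p" and h: "\<forall>j. int p ^ j dvd x"
  show "x = 0"
  proof (rule ccontr)
    assume x0: "x \<noteq> 0"
    define k where "k = nat \<bar>x\<bar>"
    have "\<bar>int p ^ k\<bar> \<le> \<bar>x\<bar>" using dvd_imp_le_int[OF x0 h[rule_format, of k]] .
    moreover have "(2::int) ^ k \<le> int p ^ k"
      using prime_ge_2_nat[OF p] by (intro power_mono) auto
    moreover have "int k < 2 ^ k" by (metis less_exp of_nat_less_iff of_nat_numeral of_nat_power)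
    moreover have "int k = \<bar>x\<bar>" unfolding k_def by simp
    ultimately show False by simp
  qed
qed

theorem corollary4p3:
  fixes S :: "nat set"
  assumes "admissible TYPE('a::comm_ring_1) S"
  shows "(\<forall>m\<in>S. \<forall>n\<in>S. m dvd n \<longrightarrow>
            (\<forall>x y :: int poly \<Rightarrow> 'a poly. lim_elem (divs n) x \<longrightarrow> lim_elem (divs n) y \<longrightarrow>
               lim_eq (divs m) x y \<longrightarrow> lim_eq (divs n) x y))
       \<and> (\<forall>x y :: int poly \<Rightarrow> 'a poly. lim_elem S x \<longrightarrow> lim_elem S y \<longrightarrow>
               lim_eq (divs 1) x y \<longrightarrow> lim_eq S x y)
       \<and> (\<forall>z :: int poly \<Rightarrow> 'a poly. lim_elem (divs 1) z \<longrightarrow>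
            ((\<exists>x. lim_elem S x \<and> lim_eq (divs 1) x z) \<longleftrightarrow>
             (\<forall>n\<in>S. \<exists>y. lim_elem (divs n) y \<and> lim_eq (divs 1) y z)))
       \<and> (\<forall>m n :: nat. 0 < m \<longrightarrow> 0 < n \<longrightarrow> m dvd n \<longrightarrow>
            (\<forall>x y :: int poly \<Rightarrow> int poly. lim_elem (divs n) x \<longrightarrow> lim_elem (divs n) y \<longrightarrow>
               lim_eq (divs m) x y \<longrightarrow> lim_eq (divs n) x y))
       \<and> (\<forall>x y :: int poly \<Rightarrow> int poly. lim_elem {k. 0 < k} x \<longrightarrow> lim_elem {k. 0 < k} y \<longrightarrow>
               lim_eq (divs 1) x y \<longrightarrow> lim_eq {k. 0 < k} x y)
       \<and> (\<forall>z :: int poly \<Rightarrow> int poly. lim_elem (divs 1) z \<longrightarrow>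
            ((\<exists>x. lim_elem {k. 0 < k} x \<and> lim_eq (divs 1) x z) \<longleftrightarrow>
             (\<forall>n>0. \<exists>y. lim_elem (divs n) y \<and> lim_eq (divs 1) y z)))"
proof -
  have ne: "S \<noteq> {}" and pos: "\<forall>n\<in>S. 0 < n" and dv: "\<forall>n\<in>S. divs n \<subseteq> S"
    and dir: "\<forall>a\<in>S. \<forall>b\<in>S. \<exists>c\<in>S. a dvd c \<and> b dvd c"
    using assms unfolding admissible_def by auto
  have inj: "\<forall>n\<in>S. INJ TYPE('a) n"
  proof
    fix n assume n: "n \<in> S"
    have "\<forall>p. prime p \<longrightarrow> p dvd n \<longrightarrow> padic_separated p TYPE('a)"
      using adm_sep[OF assms n] by blast
    then show "INJ TYPE('a) n" unfolding INJ_def using inj_n[of n] pos n by blast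
  qed
  note G1 = gen_parts[OF ne pos dir dv inj]
  have injZ: "\<forall>n\<in>{k::nat. 0 < k}. INJ TYPE(int) n"
  proof
    fix n :: nat assume n: "n \<in> {k. 0 < k}"
    have "\<forall>p. prime p \<longrightarrow> p dvd n \<longrightarrow> padic_separated p TYPE(int)"
      using int_sep by blast
    then show "INJ TYPE(int) n" unfolding INJ_def using inj_n[of n] n by blast
  qed
  have dirZ: "\<forall>a\<in>{k::nat. 0 < k}. \<forall>b\<in>{k. 0 < k}. \<exists>c\<in>{k. 0 < k}. a dvd c \<and> b dvd c"
  proof (intro ballI)
    fix a b :: nat assume "a \<in> {k. 0 < k}" "b \<in> {k. 0 < k}"
    then show "\<exists>c\<in>{k. 0 < k}. a dvd c \<and> b dvd c" by (intro bexI[of _ "a * b"]) auto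
  qed
  have dvZ: "\<forall>n\<in>{k::nat. 0 < k}. divs n \<subseteq> {k. 0 < k}" unfolding divs_def by auto
  have neZ: "{k::nat. 0 < k} \<noteq> {}" by auto
  have posZ: "\<forall>n\<in>{k::nat. 0 < k}. 0 < n" by auto
  note G2 = gen_parts[OF neZ posZ dirZ dvZ injZ]
  have P4: "\<forall>m n :: nat. 0 < m \<longrightarrow> 0 < n \<longrightarrow> m dvd n \<longrightarrow>
            (\<forall>x y :: int poly \<Rightarrow> int poly. lim_elem (divs n) x \<longrightarrow> lim_elem (divs n) y \<longrightarrow>
               lim_eq (divs m) x y \<longrightarrow> lim_eq (divs n) x y)"
    using conjunct1[OF G2] by simp
  have P6: "\<forall>z :: int poly \<Rightarrow> int poly. lim_elem (divs 1) z \<longrightarrow>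
            ((\<exists>x. lim_elem {k. 0 < k} x \<and> lim_eq (divs 1) x z) \<longleftrightarrow>
             (\<forall>n>0. \<exists>y. lim_elem (divs n) y \<and> lim_eq (divs 1) y z))"
    using conjunct2[OF conjunct2[OF G2]] by simp
  show ?thesis
    using G1 P4 conjunct1[OF conjunct2[OF G2]] P6 by blast
qed

end
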